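(* For all $n\geq 1$, \[2\bar{a}_2(n)=\bar{p}(2n,n).\]
   Context: An overpartition of $n$ is a partition of $n$ in which the first occurrence of each distinct part value may be overlined. $\bar{a}_2(n)$ is the number of overpartitions of $n$ in which the smallest part value occurs at least twice, where an overlined part and a non-overlined part of the same value count as equal. $\bar{p}(N,t)$ is the number of overpartitions of $N$ in which the largest part minus the smallest part equals $t$. *)

theory Defs
  imports Main "HOL-Library.Multiset"
begin

text \<open>An overpartition of n is represented as a pair (M, Ov): M is a multiset of
positive parts summing to n (the underlying partition), and Ov is the set of part
values whose first occurrence is overlined (so Ov is a subset of the distinct part values).\<close>

definition overpartitions :: "nat \<Rightarrow> (nat multiset \<times> nat set) set" where
  "overpartitions n = {(M, Ov). (\<forall>x\<in>#M. 0 < x) \<and> sum_mset M = n \<and> Ov \<subseteq> set_mset M}"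

definition smallest_part :: "nat multiset \<Rightarrow> nat" where
  "smallest_part M = Min (set_mset M)"

definition largest_part :: "nat multiset \<Rightarrow> nat" where
  "largest_part M = Max (set_mset M)"

definition abar2 :: "nat \<Rightarrow> nat" where
  "abar2 n = card {(M, Ov) \<in> overpartitions n. M \<noteq> {#} \<and> count M (smallest_part M) \<ge> 2}"

definition pbar :: "nat \<Rightarrow> nat \<Rightarrow> nat" where
  "pbar N t = card {(M, Ov) \<in> overpartitions N. M \<noteq> {#} \<and> largest_part M - smallest_part M = t}"

end

theory Submission
  imports Defs
begin

lemma mem_le_sum: "(x::nat) \<in># M \<Longrightarrow> x \<le> sum_mset M"
  using sum_mset.remove[of x M] by simp

lemma sp_props: "M \<noteq> {#} \<Longrightarrow> smallest_part M \<in># M \<and> (\<forall>y\<in>#M. smallest_part M \<le> y)"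
  unfolding smallest_part_def by auto

lemma lp_props: "M \<noteq> {#} \<Longrightarrow> largest_part M \<in># M \<and> (\<forall>y\<in>#M. y \<le> largest_part M)"
  unfolding largest_part_def by auto

lemma sp_eq: "x \<in># M \<Longrightarrow> (\<forall>y\<in>#M. x \<le> y) \<Longrightarrow> smallest_part M = x"
  unfolding smallest_part_def by (intro Min_eqI) auto

lemma lp_eq: "x \<in># M \<Longrightarrow> (\<forall>y\<in>#M. y \<le> x) \<Longrightarrow> largest_part M = x"
  unfolding largest_part_def by (intro Max_eqI) auto

lemma A_facts:
  fixes n :: nat
  assumes "(M,Ov) \<in> overpartitions n" "M \<noteq> {#}" "count M (smallest_part M) \<ge> 2" "n \<ge> 1"
  defines "s \<equiv> smallest_part M"
  defines "M' \<equiv> M - {#s#} + {#s+n#}"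
  shows "set_mset M' = insert (s+n) (set_mset M)" "s + n \<notin># M"
    "smallest_part M' = s" "largest_part M' = s + n" "M' - {#s+n#} + {#s#} = M"
    "(M', Ov) \<in> overpartitions (2*n)" "M' \<noteq> {#}"
    "(M', insert (s+n) Ov) \<in> overpartitions (2*n)"
proof -
  have sM: "s \<in># M" and smin: "\<forall>y\<in>#M. s \<le> y" using sp_props[OF assms(2)] s_def by auto
  have pos: "\<forall>x\<in>#M. 0 < x" and sum: "sum_mset M = n" and ov: "Ov \<subseteq> set_mset M"
    using assms(1) unfolding overpartitions_def by auto
  have "count (M - {#s#}) s > 0" using assms(3) s_def by simp
  then have s1: "s \<in># M - {#s#}" by (simp only: count_greater_zero_iff)
  have setd: "set_mset (M - {#s#}) = set_mset M"
  proof -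
    have "M = add_mset s (M - {#s#})" using sM by simp
    then have "set_mset M = insert s (set_mset (M - {#s#}))" by (metis set_mset_add_mset_insert)
    then show ?thesis using s1 by auto
  qed
  have le: "\<forall>y\<in>#M. y \<le> n" using sum mem_le_sum by auto
  have spos: "s > 0" using pos sM by auto
  show set': "set_mset M' = insert (s+n) (set_mset M)" unfolding M'_def using setd by simp
  show nin: "s + n \<notin># M"
  proof
    assume "s + n \<in># M"
    then have "s + n \<le> n" using le by blast
    then show False using spos by simp
  qed
  have sM': "s \<in># M'" using set' sM by simp
  have smin': "\<forall>y\<in>#M'. s \<le> y" unfolding set' using smin by simp
  show "smallest_part M' = s" using sM' smin' by (rule sp_eq)
  have lM': "s + n \<in># M'" using set' by simp
  have lmax': "\<forall>y\<in>#M'. y \<le> s + n" unfolding set' using le by auto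
  show "largest_part M' = s + n" using lM' lmax' by (rule lp_eq)
  show "M' - {#s+n#} + {#s#} = M" unfolding M'_def using sM by simp
  have "sum_mset M = s + sum_mset (M - {#s#})" using sM by (rule sum_mset.remove)
  then have sum': "sum_mset M' = 2*n" unfolding M'_def using sum by simp
  have pos': "\<forall>x\<in>#M'. 0 < x" unfolding set' using pos spos by simp
  have ov': "Ov \<subseteq> set_mset M'" "insert (s+n) Ov \<subseteq> set_mset M'" unfolding set' using ov by auto
  show "(M', Ov) \<in> overpartitions (2*n)" "(M', insert (s+n) Ov) \<in> overpartitions (2*n)"
    unfolding overpartitions_def using sum' pos' ov' by simp_all
  show "M' \<noteq> {#}" unfolding M'_def by simp
qed

lemma B_facts:
  fixes n :: nat
  assumes "(M,Ov) \<in> overpartitions (2*n)" "M \<noteq> {#}" "largest_part M - smallest_part M = n" "n \<ge> 1"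
  defines "s \<equiv> smallest_part M"
  defines "L \<equiv> largest_part M"
  defines "M' \<equiv> M - {#L#} + {#s#}"
  shows "L = s + n" "set_mset M' = set_mset M - {L}"
    "smallest_part M' = s" "count M' s \<ge> 2" "M' - {#s#} + {#s+n#} = M"
    "(M', Ov - {L}) \<in> overpartitions n" "M' \<noteq> {#}"
proof -
  have sM: "s \<in># M" and smin: "\<forall>y\<in>#M. s \<le> y" using sp_props[OF assms(2)] s_def by auto
  have LM: "L \<in># M" and lmax: "\<forall>y\<in>#M. y \<le> L" using lp_props[OF assms(2)] L_def by auto
  have pos: "\<forall>x\<in>#M. 0 < x" and sum: "sum_mset M = 2*n" and ov: "Ov \<subseteq> set_mset M"
    using assms(1) unfolding overpartitions_def by auto
  have "L - s = n" using assms(3) s_def L_def by simp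
  moreover have "s \<le> L" using smin LM by blast
  ultimately show Ls: "L = s + n" by simp
  have sL: "s \<noteq> L" using Ls assms(4) by simp
  define M1 where "M1 = M - {#L#}"
  have Mdec: "M = add_mset L M1" unfolding M1_def using LM by simp
  have sum1: "sum_mset M1 + L = 2*n" using sum_mset.remove[OF LM] sum unfolding M1_def by simp
  have sM1: "s \<in># M1" using sM sL Mdec by simp
  have spos: "s > 0" using pos sM by blast
  have LM1: "L \<notin># M1"
  proof
    assume "L \<in># M1"
    then have "sum_mset M1 = L + sum_mset (M1 - {#L#})" by (rule sum_mset.remove)
    moreover have "s \<in># M1 - {#L#}" using sM1 sL by (simp add: in_diff_count)
    moreover have "s \<le> sum_mset (M1 - {#L#})" using \<open>s \<in># M1 - {#L#}\<close> by (rule mem_le_sum)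
    ultimately have "sum_mset M1 \<ge> L + s" by linarith
    then show False using sum1 Ls spos by linarith
  qed
  have setM: "set_mset M = insert L (set_mset M1)" using Mdec by simp
  have M'e: "M' = add_mset s M1" unfolding M'_def M1_def by simp
  have setM': "set_mset M' = set_mset M1" using M'e sM1 by (simp add: insert_absorb)
  show set': "set_mset M' = set_mset M - {L}" unfolding setM' setM using LM1 by simp
  have sM': "s \<in># M'" using M'e by simp
  have smin': "\<forall>y\<in>#M'. s \<le> y" unfolding set' using smin by simp
  show "smallest_part M' = s" using sM' smin' by (rule sp_eq)
  have "count M1 s \<ge> 1" using sM1 by (simp add: Suc_le_eq)
  then show "count M' s \<ge> 2" using M'e by simp
  show "M' - {#s#} + {#s+n#} = M" using M'e Mdec Ls by simp
  have sum': "sum_mset M' = n" using M'e sum1 Ls by simp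
  have pos': "\<forall>x\<in>#M'. 0 < x" unfolding set' using pos by simp
  have ov': "Ov - {L} \<subseteq> set_mset M'" unfolding set' using ov by auto
  show "(M', Ov - {L}) \<in> overpartitions n"
    unfolding overpartitions_def using sum' pos' ov' by simp
  show "M' \<noteq> {#}" using M'e by simp
qed

theorem theorem5p2:
  fixes n :: nat
  assumes "n \<ge> 1"
  shows "2 * abar2 n = pbar (2 * n) n"
proof -
  define A where "A = {(M, Ov) \<in> overpartitions n. M \<noteq> {#} \<and> count M (smallest_part M) \<ge> 2}"
  define B where "B = {(M, Ov) \<in> overpartitions (2*n). M \<noteq> {#} \<and> largest_part M - smallest_part M = n}"
  define B1 where "B1 = {p \<in> B. largest_part (fst p) \<in> snd p}"
  define B2 where "B2 = {p \<in> B. largest_part (fst p) \<notin> snd p}"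
  define F where "F = (\<lambda>(M::nat multiset, Ov::nat set). (M - {#smallest_part M#} + {#smallest_part M + n#}, Ov))"
  define G where "G = (\<lambda>(M::nat multiset, Ov::nat set). (M - {#smallest_part M#} + {#smallest_part M + n#}, insert (smallest_part M + n) Ov))"
  define H where "H = (\<lambda>(M::nat multiset, Ov::nat set). (M - {#largest_part M#} + {#smallest_part M#}, Ov - {largest_part M}))"
  have Aside: "F (M,Ov) \<in> B2 \<and> H (F (M,Ov)) = (M,Ov) \<and> G (M,Ov) \<in> B1 \<and> H (G (M,Ov)) = (M,Ov)"
    if a: "(M,Ov) \<in> A" for M Ov
  proof -
    have a2: "(M,Ov) \<in> overpartitions n" "M \<noteq> {#}" "count M (smallest_part M) \<ge> 2"
      using a unfolding A_def by auto
    define s where "s = smallest_part M"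
    define M' where "M' = M - {#s#} + {#s+n#}"
    note f = A_facts[OF a2 assms, folded s_def, folded M'_def]
    have ov: "Ov \<subseteq> set_mset M" using a2(1) unfolding overpartitions_def by auto
    have nov: "s + n \<notin> Ov" using ov f(2) by blast
    have eF: "F (M,Ov) = (M', Ov)" unfolding F_def M'_def s_def by simp
    have eG: "G (M,Ov) = (M', insert (s+n) Ov)" unfolding G_def M'_def s_def by simp
    have "H (M', Ov) = (M' - {#s+n#} + {#s#}, Ov - {s+n})" unfolding H_def using f(3,4) by simp
    then have 1: "H (F (M,Ov)) = (M,Ov)" using eF f(5) nov by simp
    have "H (M', insert (s+n) Ov) = (M' - {#s+n#} + {#s#}, insert (s+n) Ov - {s+n})" unfolding H_def using f(3,4) by simp
    then have 2: "H (G (M,Ov)) = (M,Ov)" using eG f(5) nov by simp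
    have 3: "F (M,Ov) \<in> B2" unfolding eF B2_def B_def using f(3,4,6,7) nov by simp
    have 4: "G (M,Ov) \<in> B1" unfolding eG B1_def B_def using f(3,4,7,8) by simp
    show ?thesis using 1 2 3 4 by blast
  qed
  have Bside: "H (M,Ov) \<in> A \<and> (largest_part M \<notin> Ov \<longrightarrow> F (H (M,Ov)) = (M,Ov))
      \<and> (largest_part M \<in> Ov \<longrightarrow> G (H (M,Ov)) = (M,Ov))"
    if b: "(M,Ov) \<in> B" for M Ov
  proof -
    have b2: "(M,Ov) \<in> overpartitions (2*n)" "M \<noteq> {#}" "largest_part M - smallest_part M = n"
      using b unfolding B_def by auto
    define s where "s = smallest_part M"
    define L where "L = largest_part M"
    define M' where "M' = M - {#L#} + {#s#}"
    note f = B_facts[OF b2 assms, folded s_def L_def, folded M'_def]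
    have eH: "H (M,Ov) = (M', Ov - {L})" unfolding H_def M'_def s_def L_def by simp
    have 1: "H (M,Ov) \<in> A" unfolding eH A_def using f(3,4,6,7) by simp
    have "F (M', Ov - {L}) = (M' - {#s#} + {#s+n#}, Ov - {L})" unfolding F_def using f(3) by simp
    then have 2: "L \<notin> Ov \<longrightarrow> F (H (M,Ov)) = (M,Ov)"
    proof (intro impI)
      assume eF: "F (M', Ov - {L}) = (M' - {#s#} + {#s+n#}, Ov - {L})" and "L \<notin> Ov"
      then have "Ov - {L} = Ov" by simp
      then show "F (H (M,Ov)) = (M,Ov)" using eH eF f(5) by simp
    qed
    have "G (M', Ov - {L}) = (M' - {#s#} + {#s+n#}, insert (s+n) (Ov - {L}))" unfolding G_def using f(3) by simp
    then have 3: "L \<in> Ov \<longrightarrow> G (H (M,Ov)) = (M,Ov)" using eH f(5) f(1) by (simp add: insert_absorb)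
    show ?thesis using 1 2 3 L_def by blast
  qed
  have bF: "bij_betw F A B2"
  proof (rule bij_betw_byWitness[where f'=H])
    show "\<forall>a\<in>A. H (F a) = a" using Aside by auto
    show "\<forall>b\<in>B2. F (H b) = b" using Bside unfolding B2_def by auto
    show "F ` A \<subseteq> B2" using Aside by auto
    show "H ` B2 \<subseteq> A" using Bside unfolding B2_def by auto
  qed
  have bG: "bij_betw G A B1"
  proof (rule bij_betw_byWitness[where f'=H])
    show "\<forall>a\<in>A. H (G a) = a" using Aside by auto
    show "\<forall>b\<in>B1. G (H b) = b" using Bside unfolding B1_def by auto
    show "G ` A \<subseteq> B1" using Aside by auto
    show "H ` B1 \<subseteq> A" using Bside unfolding B1_def by auto
  qed
  have c1: "card B1 = card A" using bij_betw_same_card[OF bG] by simp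
  have c2: "card B2 = card A" using bij_betw_same_card[OF bF] by simp
  have BU: "B = B1 \<union> B2" and disj: "B1 \<inter> B2 = {}" unfolding B1_def B2_def by auto
  have "card B = card A + card A"
  proof (cases "finite A")
    case True
    then have "finite B1" "finite B2" using bij_betw_finite bF bG by blast+
    then show ?thesis using card_Un_disjoint[OF _ _ disj] BU c1 c2 by simp
  next
    case False
    then have "infinite B1" using bij_betw_finite bG by blast
    then have "infinite B" using BU by auto
    then show ?thesis using False by simp
  qed
  moreover have "abar2 n = card A" unfolding abar2_def A_def by simp
  moreover have "pbar (2*n) n = card B" unfolding pbar_def B_def by simp
  ultimately show ?thesis by simp
qed

end
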